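(* Let $\beta>0$ and let $S$ be a possible forest with vertex set $\{v_{s_1},\dots,v_{s_k}\}$, $s_1<\dots<s_k$. Then for every $t\ge s_k$, the probability that $S$ is a subgraph of $G^t_{1,\beta}$ is \[ \Pr(S\subset G^t_{1,\beta})=\frac{\beta}{\beta+d_S^{\mathrm{in}}(v_1)}\prod_{\substack{1\le i\le t:\\ v_i\in V^-}}\frac{\Gamma(1+\beta+d_S^{\mathrm{in}}(v_i))}{\Gamma(1+\beta)}\prod_{\substack{1<i\le t:\\ v_i\in V^+}}\frac{1}{(2+\beta)(i-1)-2}\prod_{\substack{1<i\le t:\\ v_i\notin V^+}}\left(1+\frac{c_S(i)}{(2+\beta)(i-1)-2}\right). \]
   Context: Fix a real $\beta>0$ and a positive integer $m$. The random tree process $(G^n_{1,\beta})_{n\ge1}$ is defined as follows. $G^1_{1,\beta}$ consists of a single vertex $v_1$ and no edges. Given $G^n_{1,\beta}$ with vertices $v_1,\dots,v_n$ and directed edges $e_2,\dots,e_n$ (where $e_i$ is the edge whose tail is $v_i$), $G^{n+1}_{1,\beta}$ is obtained by adding a vertex $v_{n+1}$ and a directed edge $e_{n+1}$ with tail $v_{n+1}$ and head a "target vertex" determined by a random variable $f_{n+1}$, independent of $f_2,\dots,f_n$, taking values in $\Omega_{n+1}=\{(i,v):1\le i\le n\}\cup\{(i,h),(i,t):2\le i\le n\}$ with $\Pr(f_{n+1}=(i,v))=\beta/((2+\beta)n-2)$ and $\Pr(f_{n+1}=(i,h))=\Pr(f_{n+1}=(i,t))=1/((2+\beta)n-2)$.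 If $f_{n+1}=(i,v)$ the target is $v_i$ (chosen "uniformly"); if $f_{n+1}=(i,h)$ the target is the head of $e_i$, and if $f_{n+1}=(i,t)$ the target is the tail $v_i$ of $e_i$ (chosen "preferentially", by copying the head half-edge, resp. tail half-edge, of $e_i$). Consequently the target is $v_i$ with probability $(d_n(v_i)+\beta)/((2+\beta)n-2)$, where $d_n(v)$ is the degree of $v$ in $G^n_{1,\beta}$. Each edge is regarded as two half-edges, one at each endpoint; the degree of a vertex is the number of half-edges at it (loops count twice). A possible forest is a directed forest $S$ whose vertices are labelled vertices $v_i$ of the process (identified by their index), with no isolated vertices, in which every vertex has out-degree $0$ or $1$, every edge $(v_i,v_j)$ has $i>j$, and $v_1$ (if present) has out-degree $0$. "$S\subset G^t_{1,\beta}$" means every edge $(v_i,v_j)$ of $S$ is an edge of $G^t_{1,\beta}$ (with labels matching). $d_S^{\mathrm{in}}(v)$ is the in-degree of $v$ in $S$ (taken to be $0$ if $v\notin V(S)$). $V^-=\{v_i\in V(S):\exists j>i,\ (v_j,v_i)\in E(S)\}$, $V^+=\{v_i\in V(S):\exists j<i,\ (v_i,v_j)\in E(S)\}$. For $t\ge i$, $R_t(i)=|\{j>t:(v_j,v_i)\in E(S)\}|$, and $c_S(i)=\sum_{k=1}^{i-1}R_{i-1}(k)$, i.e. the number of edges of $S$ from $\{v_i,v_{i+1},\dots\}$ to $\{v_1,\dots,v_{i-1}\}$. *)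

theory Defs
  imports "HOL-Probability.Probability"
begin

(* Kind of a value of f_{n+1}: (i,v) uniform, (i,h) head of e_i, (i,t) tail of e_i *)
datatype choice_kind = KV | KH | KT

(* A graph G^n of the process is encoded by its head function hf:
   hf i = index of the head of edge e_i (for 2 <= i <= n); other values are 0. *)

definition Omega :: "nat \<Rightarrow> (nat \<times> choice_kind) set" where
  "Omega n = {(i, KV) | i. 1 \<le> i \<and> i \<le> n} \<union> {(i, KH) | i. 2 \<le> i \<and> i \<le> n}
             \<union> {(i, KT) | i. 2 \<le> i \<and> i \<le> n}"

(* weight of outcome of f_{n+1}, i.e. when G^n has n vertices *)
definition f_weight :: "real \<Rightarrow> nat \<Rightarrow> nat \<times> choice_kind \<Rightarrow> real" where
  "f_weight \<beta> n x =
     (if x \<in> Omega n then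
        (case snd x of KV \<Rightarrow> \<beta> / ((2 + \<beta>) * real n - 2)
                     | _ \<Rightarrow> 1 / ((2 + \<beta>) * real n - 2))
      else 0)"

definition f_dist :: "real \<Rightarrow> nat \<Rightarrow> (nat \<times> choice_kind) pmf" where
  "f_dist \<beta> n = embed_pmf (f_weight \<beta> n)"

definition target :: "(nat \<Rightarrow> nat) \<Rightarrow> nat \<times> choice_kind \<Rightarrow> nat" where
  "target hf x = (case x of (i, KV) \<Rightarrow> i | (i, KH) \<Rightarrow> hf i | (i, KT) \<Rightarrow> i)"

definition step :: "real \<Rightarrow> nat \<Rightarrow> (nat \<Rightarrow> nat) \<Rightarrow> (nat \<Rightarrow> nat) pmf" where
  "step \<beta> n hf = map_pmf (\<lambda>x. hf(Suc n := target hf x)) (f_dist \<beta> n)"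

(* tree_proc beta n = distribution of G^n_{1,beta} (n >= 1) *)
fun tree_proc :: "real \<Rightarrow> nat \<Rightarrow> (nat \<Rightarrow> nat) pmf" where
  "tree_proc \<beta> 0 = return_pmf (\<lambda>_. 0)"
| "tree_proc \<beta> (Suc 0) = return_pmf (\<lambda>_. 0)"
| "tree_proc \<beta> (Suc (Suc n)) = tree_proc \<beta> (Suc n) \<bind> step \<beta> (Suc n)"

(* A forest S is a set of directed edges (i,j) meaning (v_i, v_j). *)
definition possible_forest :: "(nat \<times> nat) set \<Rightarrow> bool" where
  "possible_forest S \<longleftrightarrow> finite S \<and> (\<forall>(i, j)\<in>S. 1 \<le> j \<and> j < i)
     \<and> (\<forall>i j j'. (i, j) \<in> S \<longrightarrow> (i, j') \<in> S \<longrightarrow> j = j')"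

definition forest_vertices :: "(nat \<times> nat) set \<Rightarrow> nat set" where
  "forest_vertices S = fst ` S \<union> snd ` S"

definition subgraph_of :: "(nat \<times> nat) set \<Rightarrow> (nat \<Rightarrow> nat) \<Rightarrow> bool" where
  "subgraph_of S hf \<longleftrightarrow> (\<forall>(i, j)\<in>S. hf i = j)"

definition din :: "(nat \<times> nat) set \<Rightarrow> nat \<Rightarrow> nat" where
  "din S v = card {i. (i, v) \<in> S}"

definition Vminus :: "(nat \<times> nat) set \<Rightarrow> nat set" where
  "Vminus S = {i. \<exists>j>i. (j, i) \<in> S}"

definition Vplus :: "(nat \<times> nat) set \<Rightarrow> nat set" where
  "Vplus S = {i. \<exists>j<i. (i, j) \<in> S}"

definition R :: "(nat \<times> nat) set \<Rightarrow> nat \<Rightarrow> nat \<Rightarrow> nat" where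
  "R S t i = card {j. j > t \<and> (j, i) \<in> S}"

definition cS :: "(nat \<times> nat) set \<Rightarrow> nat \<Rightarrow> nat" where
  "cS S i = (\<Sum>k = 1..i - 1. R S (i - 1) k)"

end

theory Submission imports Defs begin

lemma Omega_eq: "Omega n = (\<lambda>i. (i,KV)) ` {1..n} \<union> (\<lambda>i. (i,KH)) ` {2..n} \<union> (\<lambda>i. (i,KT)) ` {2..n}"
  by (auto simp: Omega_def)

lemma finite_Omega: "finite (Omega n)"
  by (simp add: Omega_eq)

lemma sum_Omega: "(\<Sum>x\<in>Omega n. g x) = (\<Sum>i=1..n. g (i,KV)) + (\<Sum>i=2..n. g (i,KH)) + (\<Sum>i=2..n. g (i,KT))"
proof -
  have "(\<Sum>x\<in>Omega n. g x) = (\<Sum>x\<in>(\<lambda>i. (i,KV)) ` {1..n} \<union> (\<lambda>i. (i,KH)) ` {2..n}. g x) + (\<Sum>x\<in>(\<lambda>i. (i,KT)) ` {2..n}. g x)"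
    unfolding Omega_eq by (rule sum.union_disjoint) auto
  also have "(\<Sum>x\<in>(\<lambda>i. (i,KV)) ` {1..n} \<union> (\<lambda>i. (i,KH)) ` {2..n}. g x) = (\<Sum>x\<in>(\<lambda>i. (i,KV)) ` {1..n}. g x) + (\<Sum>x\<in>(\<lambda>i. (i,KH)) ` {2..n}. g x)"
    by (rule sum.union_disjoint) auto
  finally show ?thesis by (simp add: sum.reindex inj_on_def)
qed

lemma D_pos: "\<beta> > 0 \<Longrightarrow> n \<ge> 1 \<Longrightarrow> (2 + \<beta>) * real n - 2 > 0"
proof -
  assume "\<beta> > 0" "n \<ge> 1"
  then have "(2 + \<beta>) * real n \<ge> 2 + \<beta>" using mult_left_mono[of 1 "real n" "2+\<beta>"] by simp
  then show ?thesis using \<open>\<beta> > 0\<close> by linarith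
qed

lemma sum_f_weight:
  assumes "\<beta> > 0" "n \<ge> 1"
  shows "(\<Sum>x\<in>Omega n. f_weight \<beta> n x) = 1"
proof -
  have D: "(2 + \<beta>) * real n - 2 > 0" using D_pos assms by blast
  have "(\<Sum>x\<in>Omega n. f_weight \<beta> n x) = real n * (\<beta> / ((2 + \<beta>) * real n - 2)) + 2 * (real (n - 1) * (1 / ((2 + \<beta>) * real n - 2)))"
    unfolding sum_Omega by (simp add: f_weight_def Omega_def)
  also have "\<dots> = ((2 + \<beta>) * real n - 2) / ((2 + \<beta>) * real n - 2)"
    using assms by (simp add: of_nat_diff add_divide_distrib[symmetric] algebra_simps)
  also have "\<dots> = 1" using D by simp
  finally show ?thesis .
qed

lemma f_weight_nonneg: "\<beta> > 0 \<Longrightarrow> n \<ge> 1 \<Longrightarrow> f_weight \<beta> n x \<ge> 0"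
  using D_pos[of \<beta> n] by (auto simp: f_weight_def split: choice_kind.split)

lemma pmf_f_dist:
  assumes "\<beta> > 0" "n \<ge> 1"
  shows "pmf (f_dist \<beta> n) x = f_weight \<beta> n x" and "set_pmf (f_dist \<beta> n) \<subseteq> Omega n"
proof -
  have nn: "\<And>x. f_weight \<beta> n x \<ge> 0" using f_weight_nonneg assms by blast
  have "(\<integral>\<^sup>+x. ennreal (f_weight \<beta> n x) \<partial>count_space UNIV) = (\<Sum>x\<in>Omega n. ennreal (f_weight \<beta> n x))"
    by (rule nn_integral_count_space') (auto simp: finite_Omega f_weight_def)
  also have "\<dots> = 1" using sum_f_weight[OF assms] nn by (simp add: sum_ennreal)
  finally have I: "(\<integral>\<^sup>+x. ennreal (f_weight \<beta> n x) \<partial>count_space UNIV) = 1" .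
  show "pmf (f_dist \<beta> n) x = f_weight \<beta> n x"
    unfolding f_dist_def by (rule pmf_embed_pmf[OF nn I])
  show "set_pmf (f_dist \<beta> n) \<subseteq> Omega n"
    unfolding f_dist_def set_embed_pmf[OF nn I] by (auto simp: f_weight_def split: if_splits)
qed

lemma prob_f_dist:
  assumes "\<beta> > 0" "n \<ge> 1"
  shows "measure_pmf.prob (f_dist \<beta> n) A = (\<Sum>x\<in>Omega n \<inter> A. f_weight \<beta> n x)"
proof -
  have "measure_pmf.prob (f_dist \<beta> n) A = measure_pmf.prob (f_dist \<beta> n) (A \<inter> set_pmf (f_dist \<beta> n))"
    by (simp add: measure_Int_set_pmf)
  also have "A \<inter> set_pmf (f_dist \<beta> n) = (Omega n \<inter> A) \<inter> set_pmf (f_dist \<beta> n)"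
    using pmf_f_dist(2)[OF assms] by blast
  also have "measure_pmf.prob (f_dist \<beta> n) \<dots> = measure_pmf.prob (f_dist \<beta> n) (Omega n \<inter> A)"
    by (simp add: measure_Int_set_pmf)
  also have "\<dots> = (\<Sum>x\<in>Omega n \<inter> A. f_weight \<beta> n x)"
    by (simp add: measure_measure_pmf_finite finite_Omega pmf_f_dist(1)[OF assms])
  finally show ?thesis .
qed

lemma prob_target:
  assumes "\<beta> > 0" "n \<ge> 1" "1 \<le> j" "j \<le> n"
  shows "measure_pmf.prob (f_dist \<beta> n) {x. target hf x = j} =
    (\<beta> + (if j \<ge> 2 then 1 else 0) + real (card {i\<in>{2..n}. hf i = j})) / ((2 + \<beta>) * real n - 2)"
proof -
  let ?D = "(2 + \<beta>) * real n - 2"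
  have "(\<Sum>x\<in>Omega n \<inter> {x. target hf x = j}. f_weight \<beta> n x) = (\<Sum>x\<in>Omega n. if target hf x = j then f_weight \<beta> n x else 0)"
    by (simp add: sum.inter_restrict finite_Omega)
  also have "\<dots> = (\<Sum>i=1..n. if i = j then f_weight \<beta> n (i,KV) else 0) + (\<Sum>i=2..n. if hf i = j then f_weight \<beta> n (i,KH) else 0) + (\<Sum>i=2..n. if i = j then f_weight \<beta> n (i,KT) else 0)"
    unfolding sum_Omega by (simp add: target_def)
  also have "(\<Sum>i=1..n. if i = j then f_weight \<beta> n (i,KV) else 0) = (\<Sum>i=1..n. (if i = j then \<beta> / ?D else 0))"
    by (rule sum.cong) (auto simp: f_weight_def Omega_def)
  also have "(\<Sum>i=2..n. if hf i = j then f_weight \<beta> n (i,KH) else 0) = (\<Sum>i=2..n. (if hf i = j then 1 / ?D else 0))"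
    by (rule sum.cong) (auto simp: f_weight_def Omega_def)
  also have "(\<Sum>i=2..n. if i = j then f_weight \<beta> n (i,KT) else 0) = (\<Sum>i=2..n. (if i = j then 1 / ?D else 0))"
    by (rule sum.cong) (auto simp: f_weight_def Omega_def)
  also have "(\<Sum>i=1..n. (if i = j then \<beta> / ?D else 0)) = \<beta> / ?D" using assms by simp
  also have "(\<Sum>i=2..n. (if i = j then 1 / ?D else 0)) = (if j \<ge> 2 then 1 else 0) / ?D" using assms by simp
  also have "(\<Sum>i=2..n. (if hf i = j then 1 / ?D else 0)) = real (card {i\<in>{2..n}. hf i = j}) / ?D"
    by (simp add: sum.If_cases Int_def conj_commute)
  finally show ?thesis using prob_f_dist[OF assms(1,2)] by (simp add: add_divide_distrib)
qed


lemma prob_bind: "measure_pmf.prob (bind_pmf p f) A = (\<integral>x. measure_pmf.prob (f x) A \<partial>p)"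
  unfolding measure_pmf_bind 
  by (rule measure_pmf.measure_bind[where N="count_space UNIV"]) (auto simp: measurable_measure_pmf space_subprob_algebra prob_space_imp_subprob_space measure_pmf.prob_space_axioms)

lemma integrable_ind: "integrable (measure_pmf M) (indicator A :: _ \<Rightarrow> real)"
  by (simp add: integrable_indicator_iff measure_pmf.emeasure_finite less_top[symmetric])

lemma tree_proc_Suc: "t \<ge> 1 \<Longrightarrow> tree_proc \<beta> (Suc t) = tree_proc \<beta> t \<bind> step \<beta> t"
  by (cases t) auto

lemma support:
  assumes "\<beta> > 0" "t \<ge> 1" 
  shows "hf \<in> set_pmf (tree_proc \<beta> t) \<Longrightarrow> 2 \<le> i \<Longrightarrow> i \<le> t \<Longrightarrow> hf i < i"
  using assms(2)
proof (induction t arbitrary: hf i rule: nat_induct_at_least)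
  case base
  then show ?case by simp
next
  case (Suc t)
  from Suc.prems(1) obtain hf0 x where hf0: "hf0 \<in> set_pmf (tree_proc \<beta> t)"
    and x: "x \<in> set_pmf (f_dist \<beta> t)" and hf: "hf = hf0(Suc t := target hf0 x)"
    using Suc.hyps by (auto simp: tree_proc_Suc step_def)
  have xO: "x \<in> Omega t" using x pmf_f_dist(2)[OF assms(1) Suc.hyps] by blast
  show ?case
  proof (cases "i = Suc t")
    case True
    have "target hf0 x \<le> t"
    proof -
      obtain k c where xk: "x = (k, c)" by force
      show ?thesis
      proof (cases c)
        case KH
        then have "2 \<le> k" "k \<le> t" using xO xk by (auto simp: Omega_def)
        then have "hf0 k < k" using Suc.IH[OF hf0] by blast
        then show ?thesis using KH xk \<open>k \<le> t\<close> by (simp add: target_def)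
      qed (use xO xk in \<open>auto simp: Omega_def target_def\<close>)
    qed
    then show ?thesis using True hf by simp
  next
    case False
    then show ?thesis using Suc.IH[OF hf0, of i] Suc.prems hf by simp
  qed
qed


lemma step_prob: "measure_pmf.prob (step \<beta> t hf) {hf'. subgraph_of S hf'} =
   measure_pmf.prob (f_dist \<beta> t) {x. subgraph_of S (hf(Suc t := target hf x))}"
  by (simp add: step_def vimage_def)

lemma P_noSuc:
  assumes "\<beta> > 0" "t \<ge> 1" "\<forall>(a,b)\<in>S. a \<noteq> Suc t"
  shows "measure_pmf.prob (tree_proc \<beta> (Suc t)) {hf. subgraph_of S hf} = measure_pmf.prob (tree_proc \<beta> t) {hf. subgraph_of S hf}"
proof -
  have sg: "\<And>hf y. subgraph_of S (hf(Suc t := y)) = subgraph_of S hf"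
    using assms(3) unfolding subgraph_of_def by fastforce
  have st: "\<And>hf. measure_pmf.prob (step \<beta> t hf) {hf'. subgraph_of S hf'} = indicator {hf. subgraph_of S hf} hf"
    by (simp add: step_prob sg)
  have "measure_pmf.prob (tree_proc \<beta> (Suc t)) {hf. subgraph_of S hf} =
      (\<integral>hf. measure_pmf.prob (step \<beta> t hf) {hf'. subgraph_of S hf'} \<partial>tree_proc \<beta> t)"
    unfolding tree_proc_Suc[OF assms(2)] by (rule prob_bind)
  also have "\<dots> = (\<integral>hf. indicator {hf. subgraph_of S hf} hf \<partial>tree_proc \<beta> t)"
    by (simp only: st)
  finally show ?thesis by simp
qed

lemma P_Suc:
  assumes "\<beta> > 0" "t \<ge> 1" "\<forall>(a,b)\<in>S'. a \<noteq> Suc t" "1 \<le> j" "j \<le> t"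
  shows "measure_pmf.prob (tree_proc \<beta> (Suc t)) {hf. subgraph_of (insert (Suc t, j) S') hf} =
    ((\<beta> + (if j \<ge> 2 then 1 else 0)) * measure_pmf.prob (tree_proc \<beta> t) {hf. subgraph_of S' hf}
     + (\<Sum>i\<in>{2..t}. measure_pmf.prob (tree_proc \<beta> t) {hf. subgraph_of S' hf \<and> hf i = j}))
    / ((2 + \<beta>) * real t - 2)"
proof -
  let ?w = "\<beta> + (if j \<ge> 2 then 1 else 0)"
  let ?D = "(2 + \<beta>) * real t - 2"
  let ?A = "{hf. subgraph_of S' hf}"
  let ?B = "\<lambda>i. {hf. subgraph_of S' hf \<and> hf i = j}"
  have sg: "\<And>hf y. subgraph_of (insert (Suc t, j) S') (hf(Suc t := y)) = (subgraph_of S' hf \<and> y = j)"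
    using assms(3) unfolding subgraph_of_def by fastforce
  have st: "measure_pmf.prob (step \<beta> t hf) {hf'. subgraph_of (insert (Suc t, j) S') hf'} =
     (?w * indicator ?A hf + (\<Sum>i\<in>{2..t}. indicator (?B i) hf)) / ?D" for hf
  proof (cases "subgraph_of S' hf")
    case True
    have "measure_pmf.prob (step \<beta> t hf) {hf'. subgraph_of (insert (Suc t, j) S') hf'} =
       measure_pmf.prob (f_dist \<beta> t) {x. target hf x = j}"
      by (simp add: step_prob sg True)
    also have "\<dots> = (?w + real (card {i\<in>{2..t}. hf i = j})) / ?D"
      using prob_target[OF assms(1,2,4,5)] by simp
    also have "real (card {i\<in>{2..t}. hf i = j}) = (\<Sum>i\<in>{2..t}. indicator (?B i) hf)"
      using True by (simp add: indicator_def sum.If_cases Int_def conj_commute)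
    finally show ?thesis using True by simp
  next
    case False
    then show ?thesis by (simp add: step_prob sg indicator_def)
  qed
  have "measure_pmf.prob (tree_proc \<beta> (Suc t)) {hf. subgraph_of (insert (Suc t, j) S') hf}
     = (\<integral>hf. measure_pmf.prob (step \<beta> t hf) {hf'. subgraph_of (insert (Suc t, j) S') hf'} \<partial>tree_proc \<beta> t)"
    unfolding tree_proc_Suc[OF assms(2)] by (rule prob_bind)
  also have "\<dots> = (\<integral>hf. (?w * indicator ?A hf + (\<Sum>i\<in>{2..t}. indicator (?B i) hf)) / ?D \<partial>tree_proc \<beta> t)"
    by (simp only: st)
  also have "\<dots> = (\<integral>hf. ?w * indicator ?A hf + (\<Sum>i\<in>{2..t}. indicator (?B i) hf) \<partial>tree_proc \<beta> t) / ?D"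
    by simp
  also have "(\<integral>hf. ?w * indicator ?A hf + (\<Sum>i\<in>{2..t}. indicator (?B i) hf) \<partial>tree_proc \<beta> t)
     = ?w * (\<integral>hf. indicator ?A hf \<partial>tree_proc \<beta> t) + (\<Sum>i\<in>{2..t}. (\<integral>hf. indicator (?B i) hf \<partial>tree_proc \<beta> t))"
  proof -
    have i1: "integrable (measure_pmf (tree_proc \<beta> t)) (\<lambda>hf. ?w * indicator ?A hf)"
      by (intro integrable_mult_right integrable_ind)
    have i2: "integrable (measure_pmf (tree_proc \<beta> t)) (\<lambda>hf. \<Sum>i\<in>{2..t}. indicator (?B i) hf :: real)"
      by (rule Bochner_Integration.integrable_sum) (rule integrable_ind)
    have "(\<integral>hf. (\<Sum>i\<in>{2..t}. indicator (?B i) hf :: real) \<partial>tree_proc \<beta> t) = (\<Sum>i\<in>{2..t}. (\<integral>hf. indicator (?B i) hf \<partial>tree_proc \<beta> t))"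
      by (rule Bochner_Integration.integral_sum) (rule integrable_ind)
    then show ?thesis using Bochner_Integration.integral_add[OF i1 i2] by simp
  qed
  finally show ?thesis by simp
qed


lemma pf_edge: "possible_forest S \<Longrightarrow> (a,b)\<in>S \<Longrightarrow> 1 \<le> b \<and> b < a"
  by (auto simp: possible_forest_def)

lemma pf_finite: "possible_forest S \<Longrightarrow> finite S"
  by (auto simp: possible_forest_def)

lemma pf_uniq: "possible_forest S \<Longrightarrow> (a,b)\<in>S \<Longrightarrow> (a,b')\<in>S \<Longrightarrow> b = b'"
  by (auto simp: possible_forest_def)

lemma Vplus_eq: "possible_forest S \<Longrightarrow> Vplus S = fst ` S"
  by (force simp: Vplus_def dest: pf_edge)

lemma Vminus_eq: "possible_forest S \<Longrightarrow> Vminus S = snd ` S"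
  by (force simp: Vminus_def dest: pf_edge)

lemma finite_in: "finite S \<Longrightarrow> finite {i. (i,k)\<in>S}"
  by (rule finite_subset[of _ "fst ` S"]) force+

lemma din_zero: "possible_forest S \<Longrightarrow> k \<notin> Vminus S \<Longrightarrow> din S k = 0"
  unfolding din_def by (auto simp: Vminus_def pf_finite finite_in dest: pf_edge)

lemma din_insert: "finite S \<Longrightarrow> (i,j)\<notin>S \<Longrightarrow> din (insert (i,j) S) k = din S k + (if k = j then 1 else 0)"
proof (cases "k = j")
  case True
  assume fin: "finite S" and ij: "(i,j)\<notin>S"
  have "{a. (a, k) \<in> insert (i,j) S} = insert i {a. (a,k)\<in>S}" using True by auto
  then show ?thesis using True fin ij finite_in[OF fin] by (simp add: din_def)
qed (simp add: din_def)

lemma Vplus_insert: "j < i \<Longrightarrow> Vplus (insert (i,j) S) = insert i (Vplus S)"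
  by (auto simp: Vplus_def)

lemma Vminus_insert: "j < i \<Longrightarrow> Vminus (insert (i,j) S) = insert j (Vminus S)"
  by (auto simp: Vminus_def)

lemma R_insert:
  assumes "finite S" "(i,j)\<notin>S"
  shows "R (insert (i,j) S) n k = R S n k + (if k = j \<and> n < i then 1 else 0)"
proof -
  have fin: "finite {a. n < a \<and> (a, k) \<in> S}"
    by (rule finite_subset[OF _ finite_in[OF assms(1), of k]]) auto
  show ?thesis
  proof (cases "k = j \<and> n < i")
    case True
    then have "{a. n < a \<and> (a, k) \<in> insert (i,j) S} = insert i {a. n < a \<and> (a, k) \<in> S}" by auto
    then show ?thesis using True fin assms(2) by (simp add: R_def)
  next
    case False
    then have "{a. n < a \<and> (a, k) \<in> insert (i,j) S} = {a. n < a \<and> (a, k) \<in> S}" by auto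
    then show ?thesis using False by (simp add: R_def)
  qed
qed

lemma cS_insert:
  assumes "finite S" "(i,j)\<notin>S" "1 \<le> j"
  shows "cS (insert (i,j) S) m = cS S m + (if j < m \<and> m \<le> i then 1 else 0)"
proof -
  have "cS (insert (i,j) S) m = (\<Sum>k = 1..m - 1. R S (m - 1) k + (if k = j then (if m - 1 < i then 1 else 0) else 0))"
    unfolding cS_def by (intro sum.cong) (auto simp: R_insert[OF assms(1,2)])
  also have "\<dots> = cS S m + (if j \<in> {1..m-1} then (if m - 1 < i then 1 else 0) else 0)"
    unfolding sum.distrib cS_def by (simp add: sum.delta)
  also have "(if j \<in> {1..m-1} then (if m - 1 < i then 1 else 0) else 0) = (if j < m \<and> m \<le> i then 1 else (0::nat))"
    using assms(3) by auto
  finally show ?thesis .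
qed

lemma pf_insert: "possible_forest S \<Longrightarrow> 1 \<le> j \<Longrightarrow> j < i \<Longrightarrow> i \<notin> Vplus S \<Longrightarrow> possible_forest (insert (i,j) S)"
  unfolding possible_forest_def Vplus_def by auto

lemma P_Bi:
  assumes "\<beta> > 0" "t \<ge> 1" "2 \<le> i" "i \<le> t" "possible_forest S'"
  shows "measure_pmf.prob (tree_proc \<beta> t) {hf. subgraph_of S' hf \<and> hf i = j} =
    (if (i,j)\<in>S' then measure_pmf.prob (tree_proc \<beta> t) {hf. subgraph_of S' hf}
     else if i \<le> j \<or> i \<in> Vplus S' then 0
     else measure_pmf.prob (tree_proc \<beta> t) {hf. subgraph_of (insert (i,j) S') hf})"
proof (cases "(i,j)\<in>S'")
  case True
  then have "{hf. subgraph_of S' hf \<and> hf i = j} = {hf. subgraph_of S' hf}"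
    by (auto simp: subgraph_of_def)
  then show ?thesis using True by simp
next
  case nij: False
  show ?thesis
  proof (cases "i \<le> j")
    case True
    have "{hf. subgraph_of S' hf \<and> hf i = j} \<inter> set_pmf (tree_proc \<beta> t) = {}"
      using support[OF assms(1,2) _ assms(3,4)] True by fastforce
    then have "measure_pmf.prob (tree_proc \<beta> t) {hf. subgraph_of S' hf \<and> hf i = j} = 0"
      by (metis measure_Int_set_pmf measure_empty)
    then show ?thesis using True nij by simp
  next
    case nle: False
    show ?thesis
    proof (cases "i \<in> Vplus S'")
      case True
      then obtain j' where "(i,j')\<in>S'" by (auto simp: Vplus_def)
      then have "j' \<noteq> j" using nij by auto
      then have "{hf. subgraph_of S' hf \<and> hf i = j} = {}"
        using \<open>(i,j')\<in>S'\<close> by (auto simp: subgraph_of_def)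
      then show ?thesis using True nij by (simp del: Collect_empty_eq)
    next
      case False
      have "{hf. subgraph_of S' hf \<and> hf i = j} = {hf. subgraph_of (insert (i,j) S') hf}"
        by (auto simp: subgraph_of_def)
      then show ?thesis using False nij nle by simp
    qed
  qed
qed


lemma sum_Bi:
  assumes "\<beta> > 0" "t \<ge> 1" "possible_forest S'" "\<forall>v \<in> forest_vertices S'. v \<le> t" "1 \<le> j"
  shows "(\<Sum>i\<in>{2..t}. measure_pmf.prob (tree_proc \<beta> t) {hf. subgraph_of S' hf \<and> hf i = j}) =
     real (din S' j) * measure_pmf.prob (tree_proc \<beta> t) {hf. subgraph_of S' hf}
     + (\<Sum>i\<in>{j<..t} - Vplus S'. measure_pmf.prob (tree_proc \<beta> t) {hf. subgraph_of (insert (i,j) S') hf})"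
proof -
  let ?P = "\<lambda>S. measure_pmf.prob (tree_proc \<beta> t) {hf. subgraph_of S hf}"
  have "(\<Sum>i\<in>{2..t}. measure_pmf.prob (tree_proc \<beta> t) {hf. subgraph_of S' hf \<and> hf i = j}) =
     (\<Sum>i\<in>{2..t}. (if (i,j)\<in>S' then ?P S' else 0) + (if (i,j)\<notin>S' \<and> \<not>(i \<le> j \<or> i \<in> Vplus S') then ?P (insert (i,j) S') else 0))"
    by (intro sum.cong refl) (simp add: P_Bi[OF assms(1,2) _ _ assms(3)])
  also have "\<dots> = (\<Sum>i\<in>{i\<in>{2..t}. (i,j)\<in>S'}. ?P S') + (\<Sum>i\<in>{i\<in>{2..t}. (i,j)\<notin>S' \<and> \<not>(i \<le> j \<or> i \<in> Vplus S')}. ?P (insert (i,j) S'))"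
    unfolding sum.distrib by (simp only: sum.inter_filter finite_atLeastAtMost)
  also have "{i\<in>{2..t}. (i,j)\<in>S'} = {i. (i,j)\<in>S'}"
    using assms(4,5) pf_edge[OF assms(3)] by (force simp: forest_vertices_def)
  also have "{i\<in>{2..t}. (i,j)\<notin>S' \<and> \<not>(i \<le> j \<or> i \<in> Vplus S')} = {j<..t} - Vplus S'"
    using assms(5) by (auto simp: Vplus_def)
  finally show ?thesis by (simp add: din_def)
qed

definition Dd :: "real \<Rightarrow> nat \<Rightarrow> real" where
  "Dd \<beta> i = (2 + \<beta>) * real (i - 1) - 2"

definition Wf :: "real \<Rightarrow> (nat \<times> nat) set \<Rightarrow> real" where
  "Wf \<beta> S = \<beta> / (\<beta> + real (din S 1)) * (\<Prod>i \<in> Vminus S. Gamma (1 + \<beta> + real (din S i)) / Gamma (1 + \<beta>))"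

definition Qf :: "real \<Rightarrow> (nat \<times> nat) set \<Rightarrow> real" where
  "Qf \<beta> S = (\<Prod>i \<in> Vplus S. 1 / Dd \<beta> i)"

definition Cf :: "real \<Rightarrow> (nat \<times> nat) set \<Rightarrow> nat \<Rightarrow> real" where
  "Cf \<beta> S t = (\<Prod>i \<in> {2..t} - Vplus S. 1 + real (cS S i) / Dd \<beta> i)"

definition Fm :: "real \<Rightarrow> (nat \<times> nat) set \<Rightarrow> nat \<Rightarrow> real" where
  "Fm \<beta> S t = \<beta> / (\<beta> + real (din S 1))
      * (\<Prod>i \<in> {1..t} \<inter> Vminus S. Gamma (1 + \<beta> + real (din S i)) / Gamma (1 + \<beta>))
      * (\<Prod>i \<in> {2..t} \<inter> Vplus S. 1 / ((2 + \<beta>) * real (i - 1) - 2))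
      * (\<Prod>i \<in> {2..t} - Vplus S. 1 + real (cS S i) / ((2 + \<beta>) * real (i - 1) - 2))"

lemma Fm_eq:
  assumes "possible_forest S" "\<forall>v \<in> forest_vertices S. v \<le> t"
  shows "Fm \<beta> S t = Wf \<beta> S * Qf \<beta> S * Cf \<beta> S t"
proof -
  have "{1..t} \<inter> Vminus S = Vminus S"
    using assms pf_edge[OF assms(1)] by (force simp: Vminus_eq forest_vertices_def)
  moreover have "{2..t} \<inter> Vplus S = Vplus S"
    using assms pf_edge[OF assms(1)] by (force simp: Vplus_eq forest_vertices_def)
  ultimately show ?thesis by (simp add: Fm_def Wf_def Qf_def Cf_def Dd_def mult.assoc)
qed

lemma Gamma_step: "x > 0 \<Longrightarrow> Gamma (x + 1) = x * Gamma (x :: real)"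
  by (rule Gamma_plus1) (auto elim!: nonpos_Ints_cases)

lemma Wf_insert:
  assumes "\<beta> > 0" "possible_forest S" "1 \<le> j" "j < i" "(i,j)\<notin>S"
  shows "Wf \<beta> (insert (i,j) S) = Wf \<beta> S * (\<beta> + (if j \<ge> 2 then 1 else 0) + real (din S j))"
proof -
  define g where "g = (\<lambda>d::nat. Gamma (1 + \<beta> + real d) / Gamma (1 + \<beta>))"
  have fin: "finite S" using pf_finite[OF assms(2)] .
  have finV: "finite (Vminus S)" using Vminus_eq[OF assms(2)] fin by simp
  have din': "\<And>k. din (insert (i,j) S) k = din S k + (if k = j then 1 else 0)"
    using din_insert[OF fin assms(5)] .
  have gs: "g (d + 1) = g d * (1 + \<beta> + real d)" for d
  proof -
    have "Gamma (1 + \<beta> + real (d+1)) = Gamma ((1 + \<beta> + real d) + 1)" by (simp add: algebra_simps)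
    also have "\<dots> = (1 + \<beta> + real d) * Gamma (1 + \<beta> + real d)"
      using assms(1) by (intro Gamma_step) simp
    finally show ?thesis by (simp add: g_def)
  qed
  have "Gamma (1 + \<beta>) > 0" using assms(1) by (intro Gamma_real_pos) simp
  then have g0: "g 0 = 1" by (simp add: g_def)
  have P_new: "(\<Prod>k \<in> Vminus (insert (i,j) S). g (din (insert (i,j) S) k)) = g (din S j + 1) * (\<Prod>k \<in> Vminus S - {j}. g (din S k))"
  proof -
    have "(\<Prod>k \<in> Vminus S - {j}. g (din (insert (i,j) S) k)) = (\<Prod>k \<in> Vminus S - {j}. g (din S k))"
      by (intro prod.cong refl) (simp add: din')
    then show ?thesis unfolding Vminus_insert[OF assms(4)] using finV
      by (simp add: prod.insert_remove din')
  qed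
  have P_old: "(\<Prod>k \<in> Vminus S. g (din S k)) = g (din S j) * (\<Prod>k \<in> Vminus S - {j}. g (din S k))"
  proof (cases "j \<in> Vminus S")
    case True then show ?thesis using finV by (simp add: prod.remove)
  next
    case False then show ?thesis using din_zero[OF assms(2) False] g0 by simp
  qed
  have Wg: "\<And>X. Wf \<beta> X = \<beta> / (\<beta> + real (din X 1)) * (\<Prod>k\<in>Vminus X. g (din X k))"
    by (simp add: Wf_def g_def)
  define rest where "rest = (\<Prod>k \<in> Vminus S - {j}. g (din S k))"
  have Wn: "Wf \<beta> (insert (i,j) S) = \<beta> / (\<beta> + real (din (insert (i,j) S) 1)) * (g (din S j) * (1 + \<beta> + real (din S j)) * rest)"
    unfolding Wg P_new gs rest_def by simp
  have Wo: "Wf \<beta> S = \<beta> / (\<beta> + real (din S 1)) * (g (din S j) * rest)"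
    unfolding Wg P_old rest_def by simp
  show ?thesis
  proof (cases "j = 1")
    case True
    have pos: "\<beta> + real (din S 1) > 0" "1 + \<beta> + real (din S 1) > 0" using assms(1) by auto
    show ?thesis using True pos unfolding Wn Wo din' by (simp add: field_simps)
  next
    case False
    then have "j \<ge> 2" using assms(3) by simp
    then show ?thesis using False unfolding Wn Wo din' by (simp add: algebra_simps add_divide_distrib)
  qed
qed

lemma Qf_insert:
  assumes "possible_forest S" "j < i" "i \<notin> Vplus S"
  shows "Qf \<beta> (insert (i,j) S) = Qf \<beta> S / Dd \<beta> i"
proof -
  have "finite (Vplus S)" using Vplus_eq[OF assms(1)] pf_finite[OF assms(1)] by simp
  then show ?thesis unfolding Qf_def Vplus_insert[OF assms(2)] using assms(3) by simp
qed


lemma telescope: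
  fixes a b :: "nat \<Rightarrow> real"
  assumes "finite M" "j \<le> t"
  shows "(\<Prod>m\<in>M. if j < m \<and> m \<le> t then b m else a m) = (\<Prod>m\<in>M. a m)
     + (\<Sum>i\<in>{j<..t} \<inter> M. (b i - a i) * (\<Prod>m\<in>M - {i}. if j < m \<and> m < i then b m else a m))"
  using assms(2)
proof (induction t rule: dec_induct)
  case base
  have "(\<Prod>m\<in>M. if j < m \<and> m \<le> j then b m else a m) = (\<Prod>m\<in>M. a m)"
    by (intro prod.cong) auto
  then show ?case by simp
next
  case (step k)
  define X where "X = (\<Prod>m\<in>M - {Suc k}. if j < m \<and> m < Suc k then b m else a m)"
  have setI: "{j<..Suc k} \<inter> M = (if Suc k \<in> M then insert (Suc k) ({j<..k} \<inter> M) else {j<..k} \<inter> M)"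
    using step.hyps by (auto simp: le_Suc_eq)
  show ?case
  proof (cases "Suc k \<in> M")
    case True
    have L1: "(\<Prod>m\<in>M. if j < m \<and> m \<le> Suc k then b m else a m) = b (Suc k) * X"
    proof -
      have "(\<Prod>m\<in>M. if j < m \<and> m \<le> Suc k then b m else a m) = b (Suc k) * (\<Prod>m\<in>M - {Suc k}. if j < m \<and> m \<le> Suc k then b m else a m)"
        using True assms(1) step.hyps by (simp add: prod.remove)
      also have "(\<Prod>m\<in>M - {Suc k}. if j < m \<and> m \<le> Suc k then b m else a m) = X"
        unfolding X_def by (intro prod.cong) auto
      finally show ?thesis .
    qed
    have L0: "(\<Prod>m\<in>M. if j < m \<and> m \<le> k then b m else a m) = a (Suc k) * X"
    proof -
      have "(\<Prod>m\<in>M. if j < m \<and> m \<le> k then b m else a m) = a (Suc k) * (\<Prod>m\<in>M - {Suc k}. if j < m \<and> m \<le> k then b m else a m)"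
        using True assms(1) by (simp add: prod.remove)
      also have "(\<Prod>m\<in>M - {Suc k}. if j < m \<and> m \<le> k then b m else a m) = X"
        unfolding X_def by (intro prod.cong) auto
      finally show ?thesis .
    qed
    have S1: "(\<Sum>i\<in>{j<..Suc k} \<inter> M. (b i - a i) * (\<Prod>m\<in>M - {i}. if j < m \<and> m < i then b m else a m))
       = (b (Suc k) - a (Suc k)) * X + (\<Sum>i\<in>{j<..k} \<inter> M. (b i - a i) * (\<Prod>m\<in>M - {i}. if j < m \<and> m < i then b m else a m))"
      unfolding setI using True by (simp add: X_def)
    show ?thesis using step.IH L0 L1 S1 by (simp add: algebra_simps)
  next
    case False
    have "(\<Prod>m\<in>M. if j < m \<and> m \<le> Suc k then b m else a m) = (\<Prod>m\<in>M. if j < m \<and> m \<le> k then b m else a m)"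
      using False by (intro prod.cong refl) (auto simp: le_Suc_eq)
    then show ?thesis using step.IH setI False by simp
  qed
qed


lemma Cf_big:
  assumes "possible_forest S'" "(Suc t, j) \<notin> S'" "1 \<le> j" "j \<le> t"
  shows "Cf \<beta> (insert (Suc t, j) S') (Suc t) = (\<Prod>m\<in>{2..t} - Vplus S'.
     if j < m \<and> m \<le> t then 1 + (real (cS S' m) + 1) / Dd \<beta> m else 1 + real (cS S' m) / Dd \<beta> m)"
proof -
  have "{2..Suc t} - Vplus (insert (Suc t, j) S') = {2..t} - Vplus S'"
    using assms(4) by (auto simp: Vplus_insert)
  then show ?thesis unfolding Cf_def
    by (intro prod.cong) (auto simp: cS_insert[OF pf_finite[OF assms(1)] assms(2,3)])
qed

lemma Cf_small:
  assumes "possible_forest S'" "(i, j) \<notin> S'" "1 \<le> j" "j < i"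
  shows "Cf \<beta> (insert (i, j) S') t = (\<Prod>m\<in>({2..t} - Vplus S') - {i}.
     if j < m \<and> m < i then 1 + (real (cS S' m) + 1) / Dd \<beta> m else 1 + real (cS S' m) / Dd \<beta> m)"
proof -
  have "{2..t} - Vplus (insert (i, j) S') = ({2..t} - Vplus S') - {i}"
    using assms(4) by (auto simp: Vplus_insert)
  then show ?thesis unfolding Cf_def
    by (intro prod.cong) (auto simp: cS_insert[OF pf_finite[OF assms(1)] assms(2,3)])
qed

lemma Fm_step:
  assumes "\<beta> > 0" "t \<ge> 1" "possible_forest S'" "\<forall>v \<in> forest_vertices S'. v \<le> t" "1 \<le> j" "j \<le> t"
  shows "Fm \<beta> (insert (Suc t, j) S') (Suc t) =
    ((\<beta> + (if j \<ge> 2 then 1 else 0) + real (din S' j)) * Fm \<beta> S' t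
     + (\<Sum>i\<in>{j<..t} - Vplus S'. Fm \<beta> (insert (i,j) S') t)) / ((2 + \<beta>) * real t - 2)"
proof -
  let ?w = "\<beta> + (if j \<ge> 2 then 1 else 0) + real (din S' j)"
  let ?M = "{2..t} - Vplus S'"
  let ?a = "\<lambda>m. 1 + real (cS S' m) / Dd \<beta> m"
  let ?b = "\<lambda>m. 1 + (real (cS S' m) + 1) / Dd \<beta> m"
  let ?I = "{j<..t} - Vplus S'"
  have fin: "finite S'" using pf_finite[OF assms(3)] .
  have nS: "(Suc t, j) \<notin> S'" using assms(4) by (force simp: forest_vertices_def)
  have nV: "Suc t \<notin> Vplus S'" using assms(4) by (force simp: forest_vertices_def Vplus_def)
  have pfS: "possible_forest (insert (Suc t, j) S')" using pf_insert[OF assms(3,5) _ nV] assms(6) by simp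
  have ev: "\<And>a b. (a,b)\<in>S' \<Longrightarrow> a \<le> t \<and> b \<le> t" using assms(4) by (force simp: forest_vertices_def)
  have vS: "\<forall>v \<in> forest_vertices (insert (Suc t, j) S'). v \<le> Suc t"
    using assms(6) by (auto simp: forest_vertices_def dest!: ev)
  have jlt: "j < Suc t" using assms(6) by simp
  have D: "Dd \<beta> (Suc t) = (2 + \<beta>) * real t - 2" by (simp add: Dd_def)
  have L: "Fm \<beta> (insert (Suc t, j) S') (Suc t) = Wf \<beta> S' * ?w * (Qf \<beta> S' / Dd \<beta> (Suc t)) * (\<Prod>m\<in>?M. if j < m \<and> m \<le> t then ?b m else ?a m)"
    unfolding Fm_eq[OF pfS vS] Wf_insert[OF assms(1,3,5) jlt nS] Qf_insert[OF assms(3) jlt nV] Cf_big[OF assms(3) nS assms(5,6)]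
    using assms(6) by simp
  have F0: "Fm \<beta> S' t = Wf \<beta> S' * Qf \<beta> S' * (\<Prod>m\<in>?M. ?a m)"
    unfolding Fm_eq[OF assms(3,4)] Cf_def ..
  have Fi: "Fm \<beta> (insert (i,j) S') t = Wf \<beta> S' * ?w * Qf \<beta> S' * ((?b i - ?a i) * (\<Prod>m\<in>?M - {i}. if j < m \<and> m < i then ?b m else ?a m))"
    if i: "i \<in> ?I" for i
  proof -
    have ji: "j < i" "i \<le> t" "i \<notin> Vplus S'" using i by auto
    have nij: "(i,j) \<notin> S'" using ji by (auto simp: Vplus_def)
    have pfi: "possible_forest (insert (i, j) S')" using pf_insert[OF assms(3,5) ji(1,3)] .
    have vi: "\<forall>v \<in> forest_vertices (insert (i, j) S'). v \<le> t"
      using assms(4) ji by (auto simp: forest_vertices_def)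
    have "?b i - ?a i = 1 / Dd \<beta> i" by (simp add: add_divide_distrib)
    then show ?thesis
      unfolding Fm_eq[OF pfi vi] Wf_insert[OF assms(1,3,5) ji(1) nij] Qf_insert[OF assms(3) ji(1,3)] Cf_small[OF assms(3) nij assms(5) ji(1)]
      by simp
  qed
  have IM: "{j<..t} \<inter> ?M = ?I" using assms(5) by auto
  have T: "(\<Prod>m\<in>?M. if j < m \<and> m \<le> t then ?b m else ?a m) = (\<Prod>m\<in>?M. ?a m)
     + (\<Sum>i\<in>?I. (?b i - ?a i) * (\<Prod>m\<in>?M - {i}. if j < m \<and> m < i then ?b m else ?a m))"
    using telescope[of ?M j t ?b ?a] assms(6) IM by simp
  have "(\<Sum>i\<in>?I. Fm \<beta> (insert (i,j) S') t) = Wf \<beta> S' * ?w * Qf \<beta> S' * (\<Sum>i\<in>?I. (?b i - ?a i) * (\<Prod>m\<in>?M - {i}. if j < m \<and> m < i then ?b m else ?a m))"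
    by (simp add: Fi sum_distrib_left)
  then show ?thesis unfolding L F0 T D by (simp add: algebra_simps add_divide_distrib)
qed


lemma Cf_extend:
  assumes "possible_forest S" "\<forall>v \<in> forest_vertices S. v \<le> t" "t \<ge> 1"
  shows "Cf \<beta> S (Suc t) = Cf \<beta> S t"
proof -
  have ev: "\<And>a b. (a,b)\<in>S \<Longrightarrow> a \<le> t \<and> b \<le> t" using assms(2) by (force simp: forest_vertices_def)
  have nV: "Suc t \<notin> Vplus S" using ev by (force simp: Vplus_def)
  have R0: "R S t k = 0" for k
  proof -
    have "{a. t < a \<and> (a, k) \<in> S} = {}" using ev by force
    then show ?thesis unfolding R_def by (metis card.empty)
  qed
  have c0: "cS S (Suc t) = 0" by (simp add: cS_def R0)
  have "{2..Suc t} - Vplus S = insert (Suc t) ({2..t} - Vplus S)" using nV assms(3) by auto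
  then show ?thesis unfolding Cf_def using c0 by simp
qed

lemma main:
  assumes "\<beta> > 0" "t \<ge> 1"
  shows "\<forall>S. possible_forest S \<and> (\<forall>v \<in> forest_vertices S. v \<le> t) \<longrightarrow>
    measure_pmf.prob (tree_proc \<beta> t) {hf. subgraph_of S hf} = Fm \<beta> S t"
  using assms(2)
proof (induction t rule: nat_induct_at_least)
  case base
  show ?case
  proof (intro allI impI)
    fix S assume H: "possible_forest S \<and> (\<forall>v \<in> forest_vertices S. v \<le> 1)"
    have "S = {}"
    proof (rule ccontr)
      assume "S \<noteq> {}"
      then obtain a b where ab: "(a,b)\<in>S" by auto
      have "1 \<le> b \<and> b < a" using pf_edge[of S a b] H ab by blast
      moreover have "a \<in> forest_vertices S" using ab by (force simp: forest_vertices_def)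
      then have "a \<le> 1" using H by blast
      ultimately show False by simp
    qed
    then show "measure_pmf.prob (tree_proc \<beta> 1) {hf. subgraph_of S hf} = Fm \<beta> S 1"
      using assms(1) by (simp add: subgraph_of_def Fm_def din_def Vminus_def Vplus_def)
  qed
next
  case (Suc t)
  show ?case
  proof (intro allI impI)
    fix S assume H: "possible_forest S \<and> (\<forall>v \<in> forest_vertices S. v \<le> Suc t)"
    have pf: "possible_forest S" using H by simp
    have evS: "\<And>a b. (a,b)\<in>S \<Longrightarrow> a \<le> Suc t \<and> b \<le> Suc t" using H by (force simp: forest_vertices_def)
    show "measure_pmf.prob (tree_proc \<beta> (Suc t)) {hf. subgraph_of S hf} = Fm \<beta> S (Suc t)"
    proof (cases "\<exists>j. (Suc t, j) \<in> S")
      case False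
      have ev: "\<And>a b. (a,b)\<in>S \<Longrightarrow> a \<le> t \<and> b \<le> t"
      proof -
        fix a b assume ab: "(a,b)\<in>S"
        then have "a \<noteq> Suc t" "a \<le> Suc t" "b < a" using False evS pf_edge[OF pf] by auto
        then show "a \<le> t \<and> b \<le> t" by auto
      qed
      have vt: "\<forall>v \<in> forest_vertices S. v \<le> t" using ev by (force simp: forest_vertices_def)
      have noS: "\<forall>(a,b)\<in>S. a \<noteq> Suc t" using False by auto
      have "measure_pmf.prob (tree_proc \<beta> (Suc t)) {hf. subgraph_of S hf} = Fm \<beta> S t"
        using P_noSuc[OF assms(1) Suc.hyps noS] Suc.IH pf vt by simp
      also have "\<dots> = Fm \<beta> S (Suc t)"
      proof -
        have vt': "\<forall>v \<in> forest_vertices S. v \<le> Suc t" using H by simp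
        show ?thesis unfolding Fm_eq[OF pf vt] Fm_eq[OF pf vt'] Cf_extend[OF pf vt Suc.hyps] ..
      qed
      finally show ?thesis .
    next
      case True
      then obtain j where j: "(Suc t, j) \<in> S" by blast
      define S' where "S' = S - {(Suc t, j)}"
      have SS: "S = insert (Suc t, j) S'" using j by (auto simp: S'_def)
      have pf': "possible_forest S'" using pf unfolding S'_def possible_forest_def by auto
      have j1: "1 \<le> j" "j \<le> t" using pf_edge[OF pf j] by auto
      have noS: "\<forall>(a,b)\<in>S'. a \<noteq> Suc t" using pf_uniq[OF pf j] by (auto simp: S'_def)
      have ev: "\<And>a b. (a,b)\<in>S' \<Longrightarrow> a \<le> t \<and> b \<le> t"
      proof -
        fix a b assume ab: "(a,b)\<in>S'"
        then have "a \<noteq> Suc t" "a \<le> Suc t" "b < a" using noS evS pf_edge[OF pf] by (auto simp: S'_def)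
        then show "a \<le> t \<and> b \<le> t" by auto
      qed
      have vt: "\<forall>v \<in> forest_vertices S'. v \<le> t" using ev by (force simp: forest_vertices_def)
      let ?P = "\<lambda>X. measure_pmf.prob (tree_proc \<beta> t) {hf. subgraph_of X hf}"
      have IH0: "?P S' = Fm \<beta> S' t" using Suc.IH pf' vt by simp
      have IHi: "?P (insert (i,j) S') = Fm \<beta> (insert (i,j) S') t" if i: "i \<in> {j<..t} - Vplus S'" for i
      proof -
        have "possible_forest (insert (i,j) S')" using pf_insert[OF pf' j1(1)] i by auto
        moreover have "\<forall>v \<in> forest_vertices (insert (i,j) S'). v \<le> t"
          using vt i j1 by (auto simp: forest_vertices_def)
        ultimately show ?thesis using Suc.IH by simp
      qed
      have "measure_pmf.prob (tree_proc \<beta> (Suc t)) {hf. subgraph_of S hf} =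
         ((\<beta> + (if j \<ge> 2 then 1 else 0)) * ?P S' + (real (din S' j) * ?P S' + (\<Sum>i\<in>{j<..t} - Vplus S'. ?P (insert (i,j) S')))) / ((2 + \<beta>) * real t - 2)"
        unfolding SS P_Suc[OF assms(1) Suc.hyps noS j1] sum_Bi[OF assms(1) Suc.hyps pf' vt j1(1)] ..
      also have "\<dots> = ((\<beta> + (if j \<ge> 2 then 1 else 0) + real (din S' j)) * Fm \<beta> S' t
         + (\<Sum>i\<in>{j<..t} - Vplus S'. Fm \<beta> (insert (i,j) S') t)) / ((2 + \<beta>) * real t - 2)"
      proof -
        have "(\<Sum>i\<in>{j<..t} - Vplus S'. ?P (insert (i,j) S')) = (\<Sum>i\<in>{j<..t} - Vplus S'. Fm \<beta> (insert (i,j) S') t)"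
          by (rule sum.cong[OF refl IHi])
        then show ?thesis unfolding IH0 by (simp add: algebra_simps)
      qed
      also have "\<dots> = Fm \<beta> S (Suc t)"
        unfolding SS by (rule Fm_step[OF assms(1) Suc.hyps pf' vt j1, symmetric])
      finally show ?thesis .
    qed
  qed
qed

theorem lemma1:
  fixes \<beta> :: real and S :: "(nat \<times> nat) set" and t :: nat
  assumes "\<beta> > 0"
    and "possible_forest S"
    and "1 \<le> t" and "\<forall>v \<in> forest_vertices S. v \<le> t"
  shows "measure_pmf.prob (tree_proc \<beta> t) {hf. subgraph_of S hf} =
      \<beta> / (\<beta> + real (din S 1))
      * (\<Prod>i \<in> {1..t} \<inter> Vminus S. Gamma (1 + \<beta> + real (din S i)) / Gamma (1 + \<beta>))
      * (\<Prod>i \<in> {2..t} \<inter> Vplus S. 1 / ((2 + \<beta>) * real (i - 1) - 2))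
      * (\<Prod>i \<in> {2..t} - Vplus S. 1 + real (cS S i) / ((2 + \<beta>) * real (i - 1) - 2))"
proof -
  have "measure_pmf.prob (tree_proc \<beta> t) {hf. subgraph_of S hf} = Fm \<beta> S t"
    using main[OF assms(1,3)] assms(2,4) by simp
  then show ?thesis unfolding Fm_def .
qed

end
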